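(* Let $D$ be an integral domain. The following are equivalent: (i) $D$ is a PvMD; (ii) $D$ is essential and admits an essential representation of the form $\{D_{\mathfrak p}:\mathfrak p\in Y\}$, where $Y\subseteq\operatorname{Spec}(D)$ is quasi-compact with respect to the Zariski topology.
   Context: All rings are commutative with identity. For an integral domain $D$ with quotient field $K$ and nonzero fractional ideal $I$: $(D:I)=\{x\in K:xI\subseteq D\}$, $I^v=(D:(D:I))$, $I^t=\bigcup\{J^v:J\subseteq I \text{ finitely generated}\}$; $t$-ideals are $(0)$ and ideals with $I=I^t$; $t$-maximal ideals are $t$-ideals maximal among proper $t$-ideals. $D$ is a PvMD if $D_{\mathfrak m}$ is a valuation domain for all $t$-maximal $\mathfrak m$. A valuation overring is essential if it equals $D_{\mathfrak p}$ for a prime $\mathfrak p$; an essential representation of $D$ is a family of essential valuation overrings of $D$ with intersection $D$; $D$ is essential if it has one. The Zariski topology on $\operatorname{Spec}(D)$ has closed sets $V(\mathfrak a)=\{\mathfrak p:\mathfrak a\subseteq\mathfrak p\}$. *)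

theory Defs
  imports Main
begin

text \<open>Convention: the integral domain D is a subring of a field type 'a whose
  elements are exactly the fractions of D, i.e. 'a (= UNIV) is the quotient field K.\<close>

definition subring_of :: "'a::field set \<Rightarrow> bool" where
  "subring_of D \<longleftrightarrow> 0 \<in> D \<and> 1 \<in> D \<and> (\<forall>x\<in>D. \<forall>y\<in>D. x + y \<in> D \<and> x * y \<in> D \<and> - x \<in> D)"

definition integral_domain_with_qf_UNIV :: "'a::field set \<Rightarrow> bool" where
  "integral_domain_with_qf_UNIV D \<longleftrightarrow> subring_of D \<and>
     (\<forall>x::'a. \<exists>a\<in>D. \<exists>b\<in>D. b \<noteq> 0 \<and> x = a / b)"

definition ideal_of :: "'a::field set \<Rightarrow> 'a set \<Rightarrow> bool" where
  "ideal_of D I \<longleftrightarrow> I \<subseteq> D \<and> 0 \<in> I \<and> (\<forall>x\<in>I. \<forall>y\<in>I. x + y \<in> I) \<and> (\<forall>d\<in>D. \<forall>x\<in>I. d * x \<in> I)"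

definition prime_ideal_of :: "'a::field set \<Rightarrow> 'a set \<Rightarrow> bool" where
  "prime_ideal_of D p \<longleftrightarrow> ideal_of D p \<and> p \<noteq> D \<and>
     (\<forall>a\<in>D. \<forall>b\<in>D. a * b \<in> p \<longrightarrow> a \<in> p \<or> b \<in> p)"

definition Spec :: "'a::field set \<Rightarrow> 'a set set" where
  "Spec D = {p. prime_ideal_of D p}"

definition colon :: "'a::field set \<Rightarrow> 'a set \<Rightarrow> 'a set" where
  "colon D I = {x. \<forall>y\<in>I. x * y \<in> D}"

definition v_op :: "'a::field set \<Rightarrow> 'a set \<Rightarrow> 'a set" where
  "v_op D I = colon D (colon D I)"

definition gen_by :: "'a::field set \<Rightarrow> 'a set \<Rightarrow> 'a set" where
  "gen_by D A = {(\<Sum>a\<in>A. f a * a) | f. \<forall>a\<in>A. f a \<in> D}"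

definition t_op :: "'a::field set \<Rightarrow> 'a set \<Rightarrow> 'a set" where
  "t_op D I = \<Union>{v_op D J | J. J \<subseteq> I \<and> J \<noteq> {0} \<and> (\<exists>A. finite A \<and> J = gen_by D A)}"

definition t_ideal :: "'a::field set \<Rightarrow> 'a set \<Rightarrow> bool" where
  "t_ideal D I \<longleftrightarrow> ideal_of D I \<and> (I = {0} \<or> I = t_op D I)"

definition t_maximal :: "'a::field set \<Rightarrow> 'a set \<Rightarrow> bool" where
  "t_maximal D m \<longleftrightarrow> t_ideal D m \<and> m \<noteq> D \<and>
     (\<forall>J. t_ideal D J \<and> J \<noteq> D \<and> m \<subseteq> J \<longrightarrow> J = m)"

definition localization :: "'a::field set \<Rightarrow> 'a set \<Rightarrow> 'a set" where
  "localization D p = {a / s | a s. a \<in> D \<and> s \<in> D \<and> s \<notin> p}"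

definition valuation_domain :: "'a::field set \<Rightarrow> bool" where
  "valuation_domain V \<longleftrightarrow> subring_of V \<and> (\<forall>x::'a. x \<noteq> 0 \<longrightarrow> x \<in> V \<or> inverse x \<in> V)"

definition PvMD :: "'a::field set \<Rightarrow> bool" where
  "PvMD D \<longleftrightarrow> (\<forall>m. t_maximal D m \<longrightarrow> valuation_domain (localization D m))"

definition essential_valuation_overring :: "'a::field set \<Rightarrow> 'a set \<Rightarrow> bool" where
  "essential_valuation_overring D V \<longleftrightarrow> valuation_domain V \<and> D \<subseteq> V \<and>
     (\<exists>p\<in>Spec D. V = localization D p)"

definition essential_representation :: "'a::field set \<Rightarrow> 'a set set \<Rightarrow> bool" where
  "essential_representation D \<V> \<longleftrightarrow>
     (\<forall>V\<in>\<V>. essential_valuation_overring D V) \<and> \<Inter>\<V> = D"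

definition essential_domain :: "'a::field set \<Rightarrow> bool" where
  "essential_domain D \<longleftrightarrow> (\<exists>\<V>. essential_representation D \<V>)"

definition zariski_V :: "'a::field set \<Rightarrow> 'a set \<Rightarrow> 'a set set" where
  "zariski_V D S = {p \<in> Spec D. S \<subseteq> p}"

text \<open>Quasi-compactness in the Zariski topology: the open sets are exactly
  Spec D - V(S) for S \<subseteq> D; every open cover of Y has a finite subcover.\<close>
definition zariski_quasi_compact :: "'a::field set \<Rightarrow> 'a set set \<Rightarrow> bool" where
  "zariski_quasi_compact D Y \<longleftrightarrow> Y \<subseteq> Spec D \<and>
     (\<forall>\<A>. (\<forall>S\<in>\<A>. S \<subseteq> D) \<and> Y \<subseteq> (\<Union>S\<in>\<A>. Spec D - zariski_V D S) \<longrightarrow>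
        (\<exists>\<B>\<subseteq>\<A>. finite \<B> \<and> Y \<subseteq> (\<Union>S\<in>\<B>. Spec D - zariski_V D S)))"

end

theory Submission
  imports Defs
begin


definition module_of :: "'a::field set \<Rightarrow> 'a set \<Rightarrow> bool" where
  "module_of D M \<longleftrightarrow> 0 \<in> M \<and> (\<forall>x\<in>M. \<forall>y\<in>M. x + y \<in> M) \<and> (\<forall>d\<in>D. \<forall>x\<in>M. d * x \<in> M)"

lemma sub0: "subring_of D \<Longrightarrow> 0 \<in> D" by (simp add: subring_of_def)
lemma sub1: "subring_of D \<Longrightarrow> 1 \<in> D" by (simp add: subring_of_def)
lemma subadd: "subring_of D \<Longrightarrow> x \<in> D \<Longrightarrow> y \<in> D \<Longrightarrow> x + y \<in> D" by (simp add: subring_of_def)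
lemma submul: "subring_of D \<Longrightarrow> x \<in> D \<Longrightarrow> y \<in> D \<Longrightarrow> x * y \<in> D" by (simp add: subring_of_def)
lemma subneg: "subring_of D \<Longrightarrow> x \<in> D \<Longrightarrow> - x \<in> D" by (simp add: subring_of_def)

lemma sum_in_module:
  assumes "module_of D M" "finite A" "\<And>a. a \<in> A \<Longrightarrow> g a \<in> M"
  shows "sum g A \<in> M"
  using assms(2,3)
proof (induction A rule: finite_induct)
  case empty then show ?case using assms(1) by (simp add: module_of_def)
next
  case (insert x F) then show ?case using assms(1) by (simp add: module_of_def)
qed

lemma gen_module:
  assumes "subring_of D" shows "module_of D (gen_by D A)"
  unfolding module_of_def
proof (intro conjI ballI)
  show "0 \<in> gen_by D A" unfolding gen_by_def
    by (rule CollectI, rule exI[of _ "\<lambda>_. 0"]) (simp add: sub0[OF assms])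
next
  fix x y assume "x \<in> gen_by D A" "y \<in> gen_by D A"
  then obtain f g where f: "x = (\<Sum>a\<in>A. f a * a)" "\<forall>a\<in>A. f a \<in> D"
    and g: "y = (\<Sum>a\<in>A. g a * a)" "\<forall>a\<in>A. g a \<in> D" unfolding gen_by_def by blast
  have "x + y = (\<Sum>a\<in>A. (f a + g a) * a)" using f g by (simp add: sum.distrib distrib_right)
  moreover have "\<forall>a\<in>A. f a + g a \<in> D" using f g subadd[OF assms] by blast
  ultimately show "x + y \<in> gen_by D A" unfolding gen_by_def
    by (intro CollectI exI[of _ "\<lambda>a. f a + g a"]) simp
next
  fix d x assume d: "d \<in> D" and "x \<in> gen_by D A"
  then obtain f where f: "x = (\<Sum>a\<in>A. f a * a)" "\<forall>a\<in>A. f a \<in> D" unfolding gen_by_def by blast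
  have "d * x = (\<Sum>a\<in>A. (d * f a) * a)" using f by (simp add: sum_distrib_left mult.assoc)
  moreover have "\<forall>a\<in>A. d * f a \<in> D" using f d submul[OF assms] by blast
  ultimately show "d * x \<in> gen_by D A" unfolding gen_by_def
    by (intro CollectI exI[of _ "\<lambda>a. d * f a"]) simp
qed

lemma gen_sub:
  assumes "subring_of D" "finite A" "module_of D M" "A \<subseteq> M"
  shows "gen_by D A \<subseteq> M"
proof
  fix x assume "x \<in> gen_by D A"
  then obtain f where f: "x = (\<Sum>a\<in>A. f a * a)" "\<forall>a\<in>A. f a \<in> D" unfolding gen_by_def by blast
  show "x \<in> M" unfolding f(1)
    by (rule sum_in_module[OF assms(3,2)]) (use f assms(3,4) in \<open>auto simp: module_of_def\<close>)
qed

lemma gen_self: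
  assumes "subring_of D" "finite A" shows "A \<subseteq> gen_by D A"
proof
  fix a assume a: "a \<in> A"
  have "(\<Sum>b\<in>A. (if b = a then 1 else 0) * b) = a"
  proof -
    have "(\<lambda>b. (if b = a then 1 else 0) * b) = (\<lambda>b. if b = a then b else 0)" by auto
    have "(\<Sum>b\<in>A. if b = a then b else 0) = a" using a assms(2) by (simp add: sum.delta)
    then show ?thesis by (simp only: \<open>(\<lambda>b. (if b = a then 1 else 0) * b) = (\<lambda>b. if b = a then b else 0)\<close>)
  qed
  moreover have "\<forall>b\<in>A. (if b = a then 1 else 0) \<in> D" using sub0[OF assms(1)] sub1[OF assms(1)] by auto
  ultimately show "a \<in> gen_by D A" unfolding gen_by_def
    by (intro CollectI exI[of _ "\<lambda>b. if b = a then 1 else 0"]) (simp only: conj_commute)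
qed

lemma colon_module: "subring_of D \<Longrightarrow> module_of D (colon D X)"
  unfolding module_of_def colon_def
  by (auto simp: distrib_right mult.assoc intro: sub0 subadd submul)

lemma ideal_module: "ideal_of D I \<Longrightarrow> module_of D I"
  unfolding ideal_of_def module_of_def by blast

lemma v_sub_D: "subring_of D \<Longrightarrow> J \<subseteq> D \<Longrightarrow> v_op D J \<subseteq> D"
proof
  fix x assume "subring_of D" "J \<subseteq> D" "x \<in> v_op D J"
  moreover have "1 \<in> colon D J" using \<open>J \<subseteq> D\<close> by (auto simp: colon_def)
  ultimately have "x * 1 \<in> D" unfolding v_op_def colon_def by blast
  then show "x \<in> D" by simp
qed

lemma v_ext: "J \<subseteq> v_op D J"
  unfolding v_op_def colon_def by (auto simp: mult.commute)

lemma colon_anti: "J \<subseteq> J' \<Longrightarrow> colon D J' \<subseteq> colon D J"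
  unfolding colon_def by blast

lemma v_mono: "J \<subseteq> J' \<Longrightarrow> v_op D J \<subseteq> v_op D J'"
  unfolding v_op_def by (intro colon_anti)

lemma colon_v: "colon D (v_op D J) = colon D J"
proof
  show "colon D (v_op D J) \<subseteq> colon D J" by (rule colon_anti[OF v_ext])
  show "colon D J \<subseteq> colon D (v_op D J)" unfolding v_op_def colon_def by (auto simp: mult.commute)
qed

lemma v_into_v: "J \<subseteq> v_op D J' \<Longrightarrow> v_op D J \<subseteq> v_op D J'"
  by (metis colon_v v_mono v_op_def)

lemma v_module: "subring_of D \<Longrightarrow> module_of D (v_op D J)"
  unfolding v_op_def by (rule colon_module)



lemma module_D: "subring_of D \<Longrightarrow> module_of D D"
  unfolding module_of_def by (auto intro: sub0 subadd submul)

lemma ideal_gen_sub: "subring_of D \<Longrightarrow> ideal_of D I \<Longrightarrow> finite A \<Longrightarrow> A \<subseteq> I \<Longrightarrow> gen_by D A \<subseteq> I"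
  by (rule gen_sub) (auto intro: ideal_module)

lemma ideal_one: "subring_of D \<Longrightarrow> ideal_of D I \<Longrightarrow> 1 \<in> I \<Longrightarrow> I = D"
  unfolding ideal_of_def by (metis mult_1_right subsetI subset_antisym)

lemma gen_ne0: "gen_by D A \<noteq> {0} \<Longrightarrow> subring_of D \<Longrightarrow> \<exists>z\<in>gen_by D A. z \<noteq> 0"
  using gen_module[of D A] unfolding module_of_def by blast

lemma t_opI: "J \<subseteq> I \<Longrightarrow> J \<noteq> {0} \<Longrightarrow> finite A \<Longrightarrow> J = gen_by D A \<Longrightarrow> v_op D J \<subseteq> t_op D I"
  unfolding t_op_def by blast

lemma t_self:
  assumes sub: "subring_of D" and P: "ideal_of D P" "P \<noteq> {0}"
  shows "P \<subseteq> t_op D P"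
proof
  fix x assume x: "x \<in> P"
  obtain z where z: "z \<in> P" "z \<noteq> 0" using P unfolding ideal_of_def by blast
  let ?J = "gen_by D {x, z}"
  have fin: "finite {x, z}" by simp
  have s: "{x,z} \<subseteq> ?J" by (rule gen_self[OF sub fin])
  have "?J \<subseteq> P" using ideal_gen_sub[OF sub P(1) fin] x z by blast
  moreover have "?J \<noteq> {0}" using s z by blast
  ultimately have "v_op D ?J \<subseteq> t_op D P" using t_opI fin by blast
  moreover have "x \<in> v_op D ?J" using s v_ext by blast
  ultimately show "x \<in> t_op D P" by blast
qed

lemma t_ideal_v:
  assumes "t_ideal D m" "finite A" "gen_by D A \<subseteq> m" "gen_by D A \<noteq> {0}" "subring_of D"
  shows "v_op D (gen_by D A) \<subseteq> m"
proof -
  obtain z where "z \<in> gen_by D A" "z \<noteq> 0" using gen_ne0 assms by blast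
  then have "m \<noteq> {0}" using assms by blast
  then have "m = t_op D m" using assms(1) unfolding t_ideal_def by blast
  then show ?thesis using t_opI[OF assms(3,4,2)] by blast
qed

definition Cond :: "'a::field set \<Rightarrow> 'a set \<Rightarrow> bool" where
  "Cond D P \<longleftrightarrow> (\<forall>A. finite A \<and> A \<subseteq> P \<and> gen_by D A \<noteq> {0} \<longrightarrow> 1 \<notin> v_op D (gen_by D A))"

lemma exists_tmax:
  assumes sub: "subring_of D" and I: "ideal_of D I" and CI: "Cond D I"
  shows "\<exists>m. t_maximal D m \<and> I \<subseteq> m"
proof -
  define F where "F = {P. ideal_of D P \<and> I \<subseteq> P \<and> Cond D P}"
  have "F \<noteq> {}" using I CI unfolding F_def by blast
  moreover have "\<Union>\<C> \<in> F" if C: "\<C> \<noteq> {}" "subset.chain F \<C>" for \<C>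
  proof -
    have CF: "\<C> \<subseteq> F" and ch: "\<forall>X\<in>\<C>. \<forall>Y\<in>\<C>. X \<subseteq> Y \<or> Y \<subseteq> X"
      using C(2) unfolding subset.chain_def by auto
    have id: "ideal_of D P" if "P \<in> \<C>" for P using that CF unfolding F_def by blast
    have "ideal_of D (\<Union>\<C>)" unfolding ideal_of_def
    proof (intro conjI ballI)
      show "\<Union>\<C> \<subseteq> D" using id unfolding ideal_of_def by blast
      show "0 \<in> \<Union>\<C>" using id C(1) unfolding ideal_of_def by blast
      show "x + y \<in> \<Union>\<C>" if xy: "x \<in> \<Union>\<C>" "y \<in> \<Union>\<C>" for x y
      proof -
        obtain X Y where XY: "X \<in> \<C>" "Y \<in> \<C>" "x \<in> X" "y \<in> Y" using xy by blast
        show ?thesis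
        proof (cases "X \<subseteq> Y")
          case True then show ?thesis using XY id[of Y] unfolding ideal_of_def by blast
        next
          case False then have "Y \<subseteq> X" using ch XY by blast
          then show ?thesis using XY id[of X] unfolding ideal_of_def by blast
        qed
      qed
      show "d * x \<in> \<Union>\<C>" if "d \<in> D" "x \<in> \<Union>\<C>" for d x
        using that id unfolding ideal_of_def by blast
    qed
    moreover have "I \<subseteq> \<Union>\<C>" using C(1) CF unfolding F_def by blast
    moreover have "Cond D (\<Union>\<C>)" unfolding Cond_def
    proof (intro allI impI)
      fix A assume A: "finite A \<and> A \<subseteq> \<Union>\<C> \<and> gen_by D A \<noteq> {0}"
      then obtain B where "B \<in> \<C>" "A \<subseteq> B" using finite_subset_Union_chain[OF _ _ C(1) C(2)] by metis
      then show "1 \<notin> v_op D (gen_by D A)" using A CF unfolding F_def Cond_def by blast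
    qed
    ultimately show ?thesis unfolding F_def by blast
  qed
  ultimately obtain P where PF: "P \<in> F" and Pmax: "\<forall>X\<in>F. P \<subseteq> X \<longrightarrow> X = P"
    using subset_Zorn_nonempty[of F] by blast
  have P: "ideal_of D P" "I \<subseteq> P" "Cond D P" using PF unfolding F_def by auto
  have Psub: "t_op D P \<subseteq> P"
  proof
    fix y assume "y \<in> t_op D P"
    then obtain A0 where A0: "y \<in> v_op D (gen_by D A0)" "gen_by D A0 \<subseteq> P"
      "gen_by D A0 \<noteq> {0}" "finite A0"
      unfolding t_op_def by blast
    have A0P: "A0 \<subseteq> P" using gen_self[OF sub A0(4)] A0(2) by blast
    have yD: "y \<in> D" using v_sub_D[OF sub, of "gen_by D A0"] A0 P(1) unfolding ideal_of_def by blast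
    define Q where "Q = {p + d * y | p d. p \<in> P \<and> d \<in> D}"
    have PQ: "P \<subseteq> Q" unfolding Q_def
    proof
      fix p assume "p \<in> P" then show "p \<in> {p + d * y |p d. p \<in> P \<and> d \<in> D}"
        using sub0[OF sub] by force
    qed
    have "ideal_of D Q" unfolding ideal_of_def
    proof (intro conjI ballI)
      show "Q \<subseteq> D" unfolding Q_def using P(1) yD sub unfolding ideal_of_def
        by (auto intro: subadd submul)
      show "0 \<in> Q" using PQ P(1) unfolding ideal_of_def by blast
      show "x + z \<in> Q" if xz: "x \<in> Q" "z \<in> Q" for x z
      proof -
        obtain p1 d1 p2 d2 where e: "x = p1 + d1 * y" "z = p2 + d2 * y" "p1 \<in> P" "p2 \<in> P" "d1 \<in> D" "d2 \<in> D"
          using xz unfolding Q_def by blast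
        have "x + z = (p1 + p2) + (d1 + d2) * y" using e by (simp add: algebra_simps)
        moreover have "p1 + p2 \<in> P" "d1 + d2 \<in> D" using e P(1) sub unfolding ideal_of_def
          by (auto intro: subadd)
        ultimately show ?thesis unfolding Q_def by blast
      qed
      show "e * x \<in> Q" if ex: "e \<in> D" "x \<in> Q" for e x
      proof -
        obtain p1 d1 where q: "x = p1 + d1 * y" "p1 \<in> P" "d1 \<in> D"
          using ex unfolding Q_def by blast
        have "e * x = e * p1 + (e * d1) * y" using q by (simp add: algebra_simps)
        moreover have "e * p1 \<in> P" "e * d1 \<in> D" using q ex P(1) sub unfolding ideal_of_def
          by (auto intro: submul)
        ultimately show ?thesis unfolding Q_def by blast
      qed
    qed
    moreover have "Cond D Q" unfolding Cond_def
    proof (intro allI impI notI)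
      fix A assume A: "finite A \<and> A \<subseteq> Q \<and> gen_by D A \<noteq> {0}" and one: "1 \<in> v_op D (gen_by D A)"
      have "\<forall>a\<in>A. \<exists>p d. a = p + d * y \<and> p \<in> P \<and> d \<in> D" using A unfolding Q_def by blast
      then obtain pp dd where pd: "\<forall>a\<in>A. a = pp a + dd a * y \<and> pp a \<in> P \<and> dd a \<in> D" by metis
      define A' where "A' = pp ` A \<union> A0"
      have fA': "finite A'" using A A0(4) unfolding A'_def by blast
      have A'P: "A' \<subseteq> P" using pd A0P unfolding A'_def by blast
      have g0: "gen_by D A0 \<subseteq> gen_by D A'"
        using gen_sub[OF sub A0(4) gen_module[OF sub]] gen_self[OF sub fA'] unfolding A'_def by blast
      have ne: "gen_by D A' \<noteq> {0}" using g0 gen_ne0[OF A0(3) sub] by blast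
      have yv: "y \<in> v_op D (gen_by D A')" using A0(1) v_mono[OF g0] by blast
      have "A \<subseteq> v_op D (gen_by D A')"
      proof
        fix a assume a: "a \<in> A"
        have "pp a \<in> v_op D (gen_by D A')" using a v_ext gen_self[OF sub fA'] unfolding A'_def by blast
        moreover have "dd a * y \<in> v_op D (gen_by D A')" using yv pd a v_module[OF sub] unfolding module_of_def by blast
        ultimately show "a \<in> v_op D (gen_by D A')" using pd a v_module[OF sub] unfolding module_of_def by metis
      qed
      then have "gen_by D A \<subseteq> v_op D (gen_by D A')" using gen_sub[OF sub _ v_module[OF sub]] A by blast
      then have "1 \<in> v_op D (gen_by D A')" using v_into_v one by blast
      then show False using P(3) fA' A'P ne unfolding Cond_def by blast
    qed
    ultimately have "Q \<in> F" using PQ P(2) unfolding F_def by blast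
    then have "Q = P" using Pmax PQ by blast
    moreover have "y \<in> Q" unfolding Q_def using sub0[OF sub] sub1[OF sub] P(1) unfolding ideal_of_def
      by (metis (mono_tags, lifting) add_0 mem_Collect_eq mult_1)
    ultimately show "y \<in> P" by blast
  qed
  have tP: "t_ideal D P" unfolding t_ideal_def using P(1) Psub t_self[OF sub P(1)] by blast
  have one_notin: "1 \<notin> P"
  proof
    assume "1 \<in> P"
    have f1: "finite {1::'a}" by simp
    have "1 \<in> gen_by D {1}" using gen_self[OF sub f1] by blast
    then have "gen_by D {1} \<noteq> {0}" "1 \<in> v_op D (gen_by D {1})" using v_ext by auto
    then show False using P(3) \<open>1 \<in> P\<close> unfolding Cond_def by blast
  qed
  have "t_maximal D P" unfolding t_maximal_def
  proof (intro conjI allI impI)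
    show "t_ideal D P" by fact
    show "P \<noteq> D" using one_notin sub1[OF sub] by blast
    fix J assume J: "t_ideal D J \<and> J \<noteq> D \<and> P \<subseteq> J"
    have Jid: "ideal_of D J" using J unfolding t_ideal_def by blast
    have "Cond D J" unfolding Cond_def
    proof (intro allI impI notI)
      fix A assume A: "finite A \<and> A \<subseteq> J \<and> gen_by D A \<noteq> {0}" and one: "1 \<in> v_op D (gen_by D A)"
      have "gen_by D A \<subseteq> J" using ideal_gen_sub[OF sub Jid] A by blast
      then have "1 \<in> J" using t_ideal_v[of D J A] J A one sub by blast
      then show False using ideal_one[OF sub Jid] J by blast
    qed
    then have "J \<in> F" using Jid J P(2) unfolding F_def by blast
    then show "J = P" using Pmax J by blast
  qed
  then show ?thesis using P(2) by blast
qed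



lemma qf_sub: "integral_domain_with_qf_UNIV D \<Longrightarrow> subring_of D"
  unfolding integral_domain_with_qf_UNIV_def by blast

lemma gen_mono: "subring_of D \<Longrightarrow> finite B2 \<Longrightarrow> B1 \<subseteq> B2 \<Longrightarrow> gen_by D B1 \<subseteq> gen_by D B2"
  using gen_sub[OF _ _ gen_module] gen_self by (metis finite_subset subset_trans)

lemma prime_ideal: "p \<in> Spec D \<Longrightarrow> ideal_of D p"
  unfolding Spec_def prime_ideal_of_def by blast

lemma prime_0: "p \<in> Spec D \<Longrightarrow> 0 \<in> p"
  using prime_ideal unfolding ideal_of_def by blast

lemma prime_mult: "p \<in> Spec D \<Longrightarrow> a \<in> D \<Longrightarrow> b \<in> D \<Longrightarrow> a * b \<in> p \<Longrightarrow> a \<in> p \<or> b \<in> p"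
  unfolding Spec_def prime_ideal_of_def by blast

lemma prime_1: "subring_of D \<Longrightarrow> p \<in> Spec D \<Longrightarrow> 1 \<notin> p"
  using ideal_one prime_ideal unfolding Spec_def prime_ideal_of_def by blast

lemma D_sub_loc: "subring_of D \<Longrightarrow> 1 \<notin> p \<Longrightarrow> D \<subseteq> localization D p"
  unfolding localization_def using sub1 by force

lemma loc0: assumes "integral_domain_with_qf_UNIV D" shows "localization D {0} = UNIV"
  using assms unfolding integral_domain_with_qf_UNIV_def localization_def by blast

lemma val_UNIV: "valuation_domain (UNIV :: 'a::field set)"
  unfolding valuation_domain_def subring_of_def by simp

lemma val_over: "valuation_domain V \<Longrightarrow> subring_of W \<Longrightarrow> V \<subseteq> W \<Longrightarrow> valuation_domain W"
  unfolding valuation_domain_def by blast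

lemma loc_mono: "q \<subseteq> p \<Longrightarrow> localization D p \<subseteq> localization D q"
  unfolding localization_def by blast

lemma tmax_prime:
  assumes sub: "subring_of D" and m: "t_maximal D m" and val: "valuation_domain (localization D m)"
  shows "m \<in> Spec D"
proof -
  have mid: "ideal_of D m" and mD: "m \<noteq> D" using m unfolding t_maximal_def t_ideal_def by auto
  have m0: "0 \<in> m" using mid unfolding ideal_of_def by blast
  have "a \<in> m \<or> b \<in> m" if ab: "a \<in> D" "b \<in> D" "a * b \<in> m" for a b
  proof (rule ccontr)
    assume "\<not> (a \<in> m \<or> b \<in> m)"
    then have nm: "a \<notin> m" "b \<notin> m" by auto
    then have nz: "a \<noteq> 0" "b \<noteq> 0" using m0 by auto
    have "1 / a \<in> localization D m" "1 / b \<in> localization D m"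
      unfolding localization_def using sub1[OF sub] ab nm by blast+
    then have "(1/a) * (1/b) \<in> localization D m" using val unfolding valuation_domain_def subring_of_def by blast
    then obtain c u where cu: "1 / (a*b) = c / u" "c \<in> D" "u \<in> D" "u \<notin> m"
      unfolding localization_def by auto
    have "u \<noteq> 0" using cu m0 by auto
    then have "u = c * (a * b)" using cu nz by (simp add: field_simps)
    moreover have "c * (a * b) \<in> m" using mid cu ab unfolding ideal_of_def by blast
    ultimately show False using cu by simp
  qed
  then show ?thesis unfolding Spec_def prime_ideal_of_def using mid mD by blast
qed

lemma maxval:
  assumes sub: "subring_of D" and p: "p \<in> Spec D" and val: "valuation_domain (localization D p)"
    and fin: "finite B" "B \<noteq> {}" "B \<subseteq> D - {0}"
  shows "\<exists>a\<in>B. \<exists>s\<in>D. s \<notin> p \<and> (\<forall>b\<in>B. s * b / a \<in> D)"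
  using fin
proof (induction B rule: finite_ne_induct)
  case (singleton c)
  then show ?case using prime_1[OF sub p] sub1[OF sub] by auto
next
  case (insert c B)
  then obtain a s where as: "a \<in> B" "s \<in> D" "s \<notin> p" "\<forall>b\<in>B. s * b / a \<in> D" by auto
  have cD: "c \<in> D" "c \<noteq> 0" "a \<in> D" "a \<noteq> 0" using insert as by auto
  have p0: "0 \<in> p" by (rule prime_0[OF p])
  have "c / a \<in> localization D p \<or> inverse (c / a) \<in> localization D p"
  proof -
    have "c / a \<noteq> 0" using cD by simp
    then show ?thesis using val unfolding valuation_domain_def by blast
  qed
  then show ?case
  proof
    assume "c / a \<in> localization D p"
    then obtain e t where et: "c / a = e / t" "e \<in> D" "t \<in> D" "t \<notin> p" unfolding localization_def by auto
    have t0: "t \<noteq> 0" using et p0 by auto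
    have st: "s * t \<in> D" "s * t \<notin> p" using submul[OF sub] as et prime_mult[OF p, of s t] by auto
    have "\<forall>b\<in>insert c B. s * t * b / a \<in> D"
    proof
      fix b assume "b \<in> insert c B"
      then show "s * t * b / a \<in> D"
      proof
        assume "b = c"
        have "s * t * b / a = s * (t * (c / a))" using \<open>b = c\<close> by (simp add: field_simps)
        also have "\<dots> = s * e" using et(1) t0 by simp
        finally have eq: "s * t * b / a = s * e" .
        have "s * e \<in> D" using submul[OF sub] as et by blast
        then show ?thesis by (simp only: eq)
      next
        assume "b \<in> B"
        have eq: "s * t * b / a = t * (s * b / a)" by (simp add: field_simps)
        have "t * (s * b / a) \<in> D" using submul[OF sub] as et \<open>b \<in> B\<close> by blast
        then show ?thesis by (simp only: eq)
      qed
    qed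
    then show ?thesis using as st by blast
  next
    assume "inverse (c / a) \<in> localization D p"
    then have "a / c \<in> localization D p" by simp
    then obtain e t where et: "a / c = e / t" "e \<in> D" "t \<in> D" "t \<notin> p" unfolding localization_def by auto
    have t0: "t \<noteq> 0" using et p0 by auto
    have st: "s * t \<in> D" "s * t \<notin> p" using submul[OF sub] as et prime_mult[OF p, of s t] by auto
    have "\<forall>b\<in>insert c B. s * t * b / c \<in> D"
    proof
      fix b assume "b \<in> insert c B"
      then show "s * t * b / c \<in> D"
      proof
        assume "b = c"
        then show ?thesis using st cD by simp
      next
        assume "b \<in> B"
        have "t * a / c = e" using et t0 cD by (simp add: field_simps)
        then have eq: "s * t * b / c = (s * b / a) * e" using cD by (simp add: field_simps)
        have "(s * b / a) * e \<in> D" using submul[OF sub] as et \<open>b \<in> B\<close> by blast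
        then show ?thesis by (simp only: eq)
      qed
    qed
    then show ?thesis using as st by blast
  qed
qed

lemma module_zero: "module_of D {0}"
  unfolding module_of_def by simp

lemma ess_prime_t:
  assumes sub: "subring_of D" and p: "p \<in> Spec D" and val: "valuation_domain (localization D p)"
  shows "t_ideal D p"
proof -
  have pid: "ideal_of D p" by (rule prime_ideal[OF p])
  have "t_op D p \<subseteq> p"
  proof
    fix x assume "x \<in> t_op D p"
    then obtain A where A: "x \<in> v_op D (gen_by D A)" "gen_by D A \<subseteq> p"
      "gen_by D A \<noteq> {0}" "finite A"
      unfolding t_op_def by blast
    have Ap: "A \<subseteq> p" using gen_self[OF sub A(4)] A(2) by blast
    have AD: "A \<subseteq> D" using Ap pid unfolding ideal_of_def by blast
    define B where "B = A - {0}"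
    have "B \<noteq> {}"
    proof
      assume "B = {}"
      then have "A \<subseteq> {0}" unfolding B_def by blast
      then have "gen_by D A \<subseteq> {0}" using gen_sub[OF sub A(4) module_zero] by blast
      moreover have "0 \<in> gen_by D A" using gen_module[OF sub, of A] unfolding module_of_def by blast
      ultimately have "gen_by D A = {0}" by blast
      then show False using A(3) by blast
    qed
    moreover have "finite B" using A(4) unfolding B_def by blast
    moreover have "B \<subseteq> D - {0}" using AD unfolding B_def by blast
    ultimately have "\<exists>a\<in>B. \<exists>s\<in>D. s \<notin> p \<and> (\<forall>b\<in>B. s * b / a \<in> D)"
      using maxval[OF sub p val, of B] by blast
    then obtain a s where as: "a \<in> B" "s \<in> D" "s \<notin> p" "\<forall>b\<in>B. s * b / a \<in> D"
      by blast
    have a0: "a \<noteq> 0" "a \<in> A" using as unfolding B_def by auto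
    define y where "y = s / a"
    have Mm: "module_of D {j. y * j \<in> D}" unfolding module_of_def
    proof (intro conjI ballI)
      show "0 \<in> {j. y * j \<in> D}" using sub0[OF sub] by simp
      fix u v assume "u \<in> {j. y * j \<in> D}" "v \<in> {j. y * j \<in> D}"
      then have "y * u + y * v \<in> D" using subadd[OF sub] by blast
      then show "u + v \<in> {j. y * j \<in> D}" by (simp add: distrib_left)
    next
      fix d u assume "d \<in> D" "u \<in> {j. y * j \<in> D}"
      then have "d * (y * u) \<in> D" using submul[OF sub] by blast
      then show "d * u \<in> {j. y * j \<in> D}" by (simp add: mult.left_commute)
    qed
    have "A \<subseteq> {j. y * j \<in> D}"
    proof
      fix b assume b: "b \<in> A"
      show "b \<in> {j. y * j \<in> D}"
      proof (cases "b = 0")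
        case True then show ?thesis using sub0[OF sub] by simp
      next
        case False
        then have "s * b / a \<in> D" using as b unfolding B_def by blast
        moreover have "y * b = s * b / a" unfolding y_def by simp
        ultimately show ?thesis by simp
      qed
    qed
    then have "gen_by D A \<subseteq> {j. y * j \<in> D}" using gen_sub[OF sub A(4) Mm] by blast
    then have "y \<in> colon D (gen_by D A)" unfolding colon_def by blast
    then have e: "x * y \<in> D" using A(1) unfolding v_op_def colon_def by blast
    have xs_eq: "x * s = (x * y) * a" unfolding y_def using a0 by simp
    have xya: "(x * y) * a \<in> p"
    proof -
      have "a \<in> p" using Ap a0 by blast
      then show ?thesis using pid e unfolding ideal_of_def by blast
    qed
    moreover have "x \<in> D"
    proof -
      have "gen_by D A \<subseteq> D" using A(2) pid unfolding ideal_of_def by blast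
      then show ?thesis using v_sub_D[OF sub] A(1) by blast
    qed
    moreover have "x * s \<in> p" using xya by (simp only: xs_eq)
    ultimately show "x \<in> p" using prime_mult[OF p, of x s] as by blast
  qed
  then have "p = {0} \<or> p = t_op D p"
  proof (cases "p = {0}")
    case False
    then have "p \<subseteq> t_op D p" by (rule t_self[OF sub pid])
    then show ?thesis using \<open>t_op D p \<subseteq> p\<close> by blast
  qed simp
  then show ?thesis unfolding t_ideal_def using pid by blast
qed



lemma dir1_rep:
  assumes qf: "integral_domain_with_qf_UNIV D" and pv: "PvMD D"
  shows "essential_representation D (localization D ` {m. t_maximal D m})"
proof -
  have sub: "subring_of D" by (rule qf_sub[OF qf])
  let ?Y = "{m. t_maximal D m}"
  have ess: "essential_valuation_overring D (localization D m)" if m: "t_maximal D m" for m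
  proof -
    have val: "valuation_domain (localization D m)" using pv m unfolding PvMD_def by blast
    have sp: "m \<in> Spec D" by (rule tmax_prime[OF sub m val])
    have "D \<subseteq> localization D m" by (rule D_sub_loc[OF sub prime_1[OF sub sp]])
    then show ?thesis unfolding essential_valuation_overring_def using val sp by blast
  qed
  have "\<Inter>(localization D ` ?Y) \<subseteq> D"
  proof
    fix x assume x: "x \<in> \<Inter>(localization D ` ?Y)"
    show "x \<in> D"
    proof (rule ccontr)
      assume xD: "x \<notin> D"
      define I where "I = {d \<in> D. d * x \<in> D}"
      have Iid: "ideal_of D I" unfolding ideal_of_def
      proof (intro conjI ballI)
        show "I \<subseteq> D" unfolding I_def by blast
        show "0 \<in> I" unfolding I_def using sub0[OF sub] by simp
        fix u v assume uv: "u \<in> I" "v \<in> I"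
        then have "u * x + v * x \<in> D" "u + v \<in> D" using subadd[OF sub] unfolding I_def by blast+
        then show "u + v \<in> I" unfolding I_def by (simp add: distrib_right)
      next
        fix d u assume du: "d \<in> D" "u \<in> I"
        then have "d * (u * x) \<in> D" "d * u \<in> D" using submul[OF sub] unfolding I_def by blast+
        then show "d * u \<in> I" unfolding I_def by (simp add: mult.assoc)
      qed
      have "Cond D I" unfolding Cond_def
      proof (intro allI impI notI)
        fix A assume A: "finite A \<and> A \<subseteq> I \<and> gen_by D A \<noteq> {0}" and one: "1 \<in> v_op D (gen_by D A)"
        have Mx: "module_of D {j. x * j \<in> D}" unfolding module_of_def
        proof (intro conjI ballI)
          show "0 \<in> {j. x * j \<in> D}" using sub0[OF sub] by simp
          fix u v assume "u \<in> {j. x * j \<in> D}" "v \<in> {j. x * j \<in> D}"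
          then have "x * u + x * v \<in> D" using subadd[OF sub] by blast
          then show "u + v \<in> {j. x * j \<in> D}" by (simp add: distrib_left)
        next
          fix d u assume "d \<in> D" "u \<in> {j. x * j \<in> D}"
          then have "d * (x * u) \<in> D" using submul[OF sub] by blast
          then show "d * u \<in> {j. x * j \<in> D}" by (simp add: mult.left_commute)
        qed
        have "A \<subseteq> {j. x * j \<in> D}" using A unfolding I_def by (auto simp: mult.commute)
        then have "gen_by D A \<subseteq> {j. x * j \<in> D}" using gen_sub[OF sub _ Mx] A by blast
        then have "x \<in> colon D (gen_by D A)" unfolding colon_def by blast
        then have "1 * x \<in> D" using one unfolding v_op_def colon_def by blast
        then show False using xD by simp
      qed
      then obtain m where m: "t_maximal D m" "I \<subseteq> m" using exists_tmax[OF sub Iid] by blast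
      then have "x \<in> localization D m" using x by blast
      then obtain a s where as: "x = a / s" "a \<in> D" "s \<in> D" "s \<notin> m" unfolding localization_def by blast
      have "0 \<in> m" using m unfolding t_maximal_def t_ideal_def ideal_of_def by blast
      then have "s \<noteq> 0" using as by blast
      then have "s * x = a" using as by simp
      then have "s \<in> I" unfolding I_def using as by simp
      then show False using m as by blast
    qed
  qed
  moreover have "D \<subseteq> \<Inter>(localization D ` ?Y)"
    using ess unfolding essential_valuation_overring_def by blast
  ultimately show ?thesis unfolding essential_representation_def using ess by blast
qed

lemma dir1_qc:
  assumes qf: "integral_domain_with_qf_UNIV D" and pv: "PvMD D"
  shows "zariski_quasi_compact D {m. t_maximal D m}"
proof -
  have sub: "subring_of D" by (rule qf_sub[OF qf])
  let ?Y = "{m. t_maximal D m}"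
  have YS: "?Y \<subseteq> Spec D"
  proof
    fix m assume "m \<in> ?Y"
    then have m: "t_maximal D m" by simp
    have val: "valuation_domain (localization D m)" using pv m unfolding PvMD_def by blast
    show "m \<in> Spec D" by (rule tmax_prime[OF sub m val])
  qed
  have "\<exists>\<B>\<subseteq>\<A>. finite \<B> \<and> ?Y \<subseteq> (\<Union>S\<in>\<B>. Spec D - zariski_V D S)"
    if AD: "\<forall>S\<in>\<A>. S \<subseteq> D" and cov: "?Y \<subseteq> (\<Union>S\<in>\<A>. Spec D - zariski_V D S)" for \<A>
  proof (rule ccontr)
    assume nc: "\<not> (\<exists>\<B>\<subseteq>\<A>. finite \<B> \<and> ?Y \<subseteq> (\<Union>S\<in>\<B>. Spec D - zariski_V D S))"
    define I where "I = {x. \<exists>B. finite B \<and> B \<subseteq> \<Union>\<A> \<and> x \<in> gen_by D B}"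
    have genD: "gen_by D B \<subseteq> D" if BB: "finite B" "B \<subseteq> \<Union>\<A>" for B
    proof -
      have "B \<subseteq> D" using BB(2) AD by blast
      then show ?thesis by (rule gen_sub[OF sub BB(1) module_D[OF sub]])
    qed
    have Iid: "ideal_of D I" unfolding ideal_of_def
    proof (intro conjI ballI)
      show "I \<subseteq> D" unfolding I_def using genD by blast
      have "0 \<in> gen_by D {}" using gen_module[OF sub, of "{}"] unfolding module_of_def by blast
      then show "0 \<in> I" unfolding I_def by blast
      show "x + y \<in> I" if xy: "x \<in> I" "y \<in> I" for x y
      proof -
        obtain B1 B2 where B: "finite B1" "B1 \<subseteq> \<Union>\<A>" "x \<in> gen_by D B1"
          "finite B2" "B2 \<subseteq> \<Union>\<A>" "y \<in> gen_by D B2" using xy unfolding I_def by blast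
        have "x \<in> gen_by D (B1 \<union> B2)" "y \<in> gen_by D (B1 \<union> B2)"
          using gen_mono[OF sub, of "B1 \<union> B2"] B by blast+
        then have "x + y \<in> gen_by D (B1 \<union> B2)" using gen_module[OF sub] unfolding module_of_def by blast
        then show ?thesis unfolding I_def using B by blast
      qed
      show "d * x \<in> I" if dx: "d \<in> D" "x \<in> I" for d x
      proof -
        obtain B where B: "finite B" "B \<subseteq> \<Union>\<A>" "x \<in> gen_by D B" using dx unfolding I_def by blast
        then have "d * x \<in> gen_by D B" using dx gen_module[OF sub, of B] unfolding module_of_def by blast
        then show ?thesis unfolding I_def using B by blast
      qed
    qed
    have "Cond D I" unfolding Cond_def
    proof (intro allI impI notI)
      fix A assume A: "finite A \<and> A \<subseteq> I \<and> gen_by D A \<noteq> {0}" and one: "1 \<in> v_op D (gen_by D A)"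
      have "\<forall>a\<in>A. \<exists>B. finite B \<and> B \<subseteq> \<Union>\<A> \<and> a \<in> gen_by D B" using A unfolding I_def by blast
      then obtain BB where BB: "\<forall>a\<in>A. finite (BB a) \<and> BB a \<subseteq> \<Union>\<A> \<and> a \<in> gen_by D (BB a)" by metis
      define B where "B = \<Union>(BB ` A)"
      have fB: "finite B" using A BB unfolding B_def by blast
      have BA: "B \<subseteq> \<Union>\<A>" using BB unfolding B_def by blast
      have "A \<subseteq> gen_by D B"
      proof
        fix a assume a: "a \<in> A"
        have "BB a \<subseteq> B" using a unfolding B_def by blast
        then show "a \<in> gen_by D B" using gen_mono[OF sub fB] BB a by blast
      qed
      then have gAB: "gen_by D A \<subseteq> gen_by D B" using gen_sub[OF sub _ gen_module[OF sub]] A by blast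
      have "\<forall>b\<in>B. \<exists>S\<in>\<A>. b \<in> S" using BA by blast
      then obtain SS where SS: "\<forall>b\<in>B. SS b \<in> \<A> \<and> b \<in> SS b" by metis
      have sb: "SS ` B \<subseteq> \<A>" "finite (SS ` B)" using SS fB by auto
      have nc': "\<forall>\<B>. \<B> \<subseteq> \<A> \<longrightarrow> finite \<B> \<longrightarrow> \<not> ?Y \<subseteq> (\<Union>S\<in>\<B>. Spec D - zariski_V D S)"
        using nc by blast
      have "\<not> ?Y \<subseteq> (\<Union>S\<in>SS ` B. Spec D - zariski_V D S)" using nc'[rule_format, OF sb] .
      then obtain m where mY: "m \<in> ?Y" and mn: "m \<notin> (\<Union>S\<in>SS ` B. Spec D - zariski_V D S)"
        by blast
      have msp: "m \<in> Spec D" using YS mY by blast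
      have "B \<subseteq> m"
      proof
        fix b assume b: "b \<in> B"
        then have "m \<in> zariski_V D (SS b)" using mn msp by blast
        then show "b \<in> m" using SS b unfolding zariski_V_def by blast
      qed
      have mt: "t_ideal D m" "m \<noteq> D" using mY unfolding t_maximal_def by auto
      have mid: "ideal_of D m" using mt unfolding t_ideal_def by blast
      have "gen_by D A \<subseteq> m" using gAB ideal_gen_sub[OF sub mid fB \<open>B \<subseteq> m\<close>] by blast
      then have "v_op D (gen_by D A) \<subseteq> m" using t_ideal_v[OF mt(1)] A sub by blast
      then have "1 \<in> m" using one by blast
      then show False using ideal_one[OF sub mid] mt by blast
    qed
    then obtain P where P: "t_maximal D P" "I \<subseteq> P" using exists_tmax[OF sub Iid] by blast
    then obtain S where S: "S \<in> \<A>" "P \<in> Spec D - zariski_V D S" using cov by blast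
    have "S \<subseteq> I"
    proof
      fix s assume s: "s \<in> S"
      have "finite {s}" "{s} \<subseteq> \<Union>\<A>" using s S by auto
      moreover have "s \<in> gen_by D {s}" using gen_self[OF sub, of "{s}"] by blast
      ultimately show "s \<in> I" unfolding I_def by blast
    qed
    then show False using S P unfolding zariski_V_def by blast
  qed
  then show ?thesis unfolding zariski_quasi_compact_def using YS by blast
qed

lemma dir2:
  assumes qf: "integral_domain_with_qf_UNIV D" and qc: "zariski_quasi_compact D Y"
    and er: "essential_representation D (localization D ` Y)"
  shows "PvMD D"
  unfolding PvMD_def
proof (intro allI impI)
  have sub: "subring_of D" by (rule qf_sub[OF qf])
  fix m assume m: "t_maximal D m"
  have mt: "t_ideal D m" "m \<noteq> D" using m unfolding t_maximal_def by auto
  have mid: "ideal_of D m" using mt unfolding t_ideal_def by blast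
  have YS: "Y \<subseteq> Spec D" using qc unfolding zariski_quasi_compact_def by blast
  have evo: "essential_valuation_overring D (localization D p)" if "p \<in> Y" for p
    using er that unfolding essential_representation_def by blast
  have inter: "\<Inter>(localization D ` Y) = D" using er unfolding essential_representation_def by blast
  show "valuation_domain (localization D m)"
  proof (cases "m = {0}")
    case True then show ?thesis using loc0[OF qf] val_UNIV by simp
  next
    case False
    then obtain b where b: "b \<in> m" "b \<noteq> 0" using mid unfolding ideal_of_def by blast
    have "\<exists>p\<in>Y. m \<subseteq> p"
    proof (rule ccontr)
      assume nex: "\<not> (\<exists>p\<in>Y. m \<subseteq> p)"
      define \<A> where "\<A> = (\<lambda>a. {a}) ` m"
      have AD: "\<forall>S\<in>\<A>. S \<subseteq> D" using mid unfolding \<A>_def ideal_of_def by blast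
      have "Y \<subseteq> (\<Union>S\<in>\<A>. Spec D - zariski_V D S)"
      proof
        fix p assume p: "p \<in> Y"
        then obtain a where a: "a \<in> m" "a \<notin> p" using nex by blast
        then have "p \<in> Spec D - zariski_V D {a}" using YS p unfolding zariski_V_def by blast
        then show "p \<in> (\<Union>S\<in>\<A>. Spec D - zariski_V D S)" using a unfolding \<A>_def by blast
      qed
      moreover have "\<forall>\<A>. (\<forall>S\<in>\<A>. S \<subseteq> D) \<and> Y \<subseteq> (\<Union>S\<in>\<A>. Spec D - zariski_V D S) \<longrightarrow>
        (\<exists>\<B>\<subseteq>\<A>. finite \<B> \<and> Y \<subseteq> (\<Union>S\<in>\<B>. Spec D - zariski_V D S))"
        using qc unfolding zariski_quasi_compact_def by blast
      ultimately have "\<exists>\<B>\<subseteq>\<A>. finite \<B> \<and> Y \<subseteq> (\<Union>S\<in>\<B>. Spec D - zariski_V D S)"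
        using AD by blast
      then obtain \<B> where B: "\<B> \<subseteq> \<A>" "finite \<B>" "Y \<subseteq> (\<Union>S\<in>\<B>. Spec D - zariski_V D S)"
        by blast
      define A where "A = insert b (\<Union>\<B>)"
      have fA: "finite A" using B unfolding A_def \<A>_def by auto
      have Am: "A \<subseteq> m" using B b unfolding A_def \<A>_def by blast
      have gm: "gen_by D A \<subseteq> m" by (rule ideal_gen_sub[OF sub mid fA Am])
      have bA: "b \<in> gen_by D A" using gen_self[OF sub fA] unfolding A_def by blast
      then have gn: "gen_by D A \<noteq> {0}" using b by blast
      have "colon D (gen_by D A) \<subseteq> D"
      proof
        fix z assume z: "z \<in> colon D (gen_by D A)"
        have "z \<in> localization D p" if p: "p \<in> Y" for p
        proof -
          obtain S where S: "S \<in> \<B>" "p \<in> Spec D - zariski_V D S" using B p by blast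
          then obtain a where a: "S = {a}" "a \<in> m" using B unfolding \<A>_def by blast
          have ap: "a \<notin> p" using S a unfolding zariski_V_def by blast
          have "a \<in> A" using S a unfolding A_def by blast
          then have za: "z * a \<in> D" using z gen_self[OF sub fA] unfolding colon_def by blast
          have aD: "a \<in> D" using a mid unfolding ideal_of_def by blast
          have "a \<noteq> 0" using ap prime_0[OF YS[THEN subsetD, OF p]] by blast
          then have "z = (z * a) / a" by simp
          then show ?thesis unfolding localization_def using za aD ap by blast
        qed
        then show "z \<in> D" using inter by blast
      qed
      then have "1 \<in> v_op D (gen_by D A)" unfolding v_op_def colon_def by auto
      then have "1 \<in> m" using t_ideal_v[OF mt(1) fA gm gn sub] by blast
      then show False using ideal_one[OF sub mid] mt by blast
    qed
    then obtain p where p: "p \<in> Y" "m \<subseteq> p" by blast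
    have sp: "p \<in> Spec D" using YS p by blast
    have val: "valuation_domain (localization D p)" using evo[OF p(1)] unfolding essential_valuation_overring_def by blast
    have "t_ideal D p" by (rule ess_prime_t[OF sub sp val])
    moreover have "p \<noteq> D" using prime_1[OF sub sp] sub1[OF sub] by blast
    ultimately have "p = m" using m p(2) unfolding t_maximal_def by blast
    then show ?thesis using val by simp
  qed
qed

theorem corollary2p7:
  fixes D :: "'a::field set"
  assumes "integral_domain_with_qf_UNIV D"
  shows "PvMD D \<longleftrightarrow>
    (essential_domain D \<and>
     (\<exists>Y. zariski_quasi_compact D Y \<and> essential_representation D (localization D ` Y)))"
proof
  assume pv: "PvMD D"
  have r: "essential_representation D (localization D ` {m. t_maximal D m})" by (rule dir1_rep[OF assms pv])
  have q: "zariski_quasi_compact D {m. t_maximal D m}" by (rule dir1_qc[OF assms pv])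
  show "essential_domain D \<and>
     (\<exists>Y. zariski_quasi_compact D Y \<and> essential_representation D (localization D ` Y))"
    unfolding essential_domain_def using r q by blast
next
  assume "essential_domain D \<and>
     (\<exists>Y. zariski_quasi_compact D Y \<and> essential_representation D (localization D ` Y))"
  then obtain Y where "zariski_quasi_compact D Y" "essential_representation D (localization D ` Y)" by blast
  then show "PvMD D" using dir2[OF assms] by blast
qed

end
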